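(* Let $\preceq$ be a topological orientation on $\mathbb{R}$ (with the metric $d(x,y)=|x-y|$) such that $x\preceq y$ implies $x\le y$. Assume every left-bounded pair for $\preceq$ has a meet in $\mathbb{R}$. Then $(\mathbb{R},\preceq)$ is a cc sponge.
   Context: An orientation is a reflexive, antisymmetric binary relation; it is topological if it is a closed subset of $\mathbb{R}\times\mathbb{R}$. A set $P$ is left-bounded if some $s$ satisfies $s\preceq p$ for all $p\in P$, right-bounded if some $s$ satisfies $p\preceq s$ for all $p\in P$. The meet of $P$ is an $x$ with $x\preceq p$ for all $p\in P$ and $y\preceq x$ for every $y$ with $y\preceq p$ for all $p\in P$; the join is dual. $(\mathbb{R},\preceq)$ is a cc sponge if every nonempty right-bounded subset has a join. *)

theory Defs
  imports "HOL-Analysis.Analysis"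
begin

definition orientation :: "('a \<Rightarrow> 'a \<Rightarrow> bool) \<Rightarrow> bool" where
  "orientation R \<longleftrightarrow> (\<forall>x. R x x) \<and> (\<forall>x y. R x y \<and> R y x \<longrightarrow> x = y)"

definition topological_orientation :: "(real \<Rightarrow> real \<Rightarrow> bool) \<Rightarrow> bool" where
  "topological_orientation R \<longleftrightarrow> orientation R \<and> closed {(x, y). R x y}"

definition left_bounded :: "('a \<Rightarrow> 'a \<Rightarrow> bool) \<Rightarrow> 'a set \<Rightarrow> bool" where
  "left_bounded R P \<longleftrightarrow> (\<exists>s. \<forall>p\<in>P. R s p)"

definition right_bounded :: "('a \<Rightarrow> 'a \<Rightarrow> bool) \<Rightarrow> 'a set \<Rightarrow> bool" where
  "right_bounded R P \<longleftrightarrow> (\<exists>s. \<forall>p\<in>P. R p s)"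

definition is_meet :: "('a \<Rightarrow> 'a \<Rightarrow> bool) \<Rightarrow> 'a set \<Rightarrow> 'a \<Rightarrow> bool" where
  "is_meet R P x \<longleftrightarrow> (\<forall>p\<in>P. R x p) \<and> (\<forall>y. (\<forall>p\<in>P. R y p) \<longrightarrow> R y x)"

definition is_join :: "('a \<Rightarrow> 'a \<Rightarrow> bool) \<Rightarrow> 'a set \<Rightarrow> 'a \<Rightarrow> bool" where
  "is_join R P x \<longleftrightarrow> (\<forall>p\<in>P. R p x) \<and> (\<forall>y. (\<forall>p\<in>P. R p y) \<longrightarrow> R x y)"

definition cc_sponge :: "('a \<Rightarrow> 'a \<Rightarrow> bool) \<Rightarrow> bool" where
  "cc_sponge R \<longleftrightarrow> (\<forall>P. P \<noteq> {} \<and> right_bounded R P \<longrightarrow> (\<exists>x. is_join R P x))"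

end

theory Submission
  imports Defs
begin

lemma section_closed:
  fixes R :: "real \<Rightarrow> real \<Rightarrow> bool"
  assumes "closed {(x, y). R x y}"
  shows "closed {y. R p y}"
proof -
  have "{y. R p y} = (\<lambda>y. (p, y)) -` {(x, y). R x y}" by auto
  moreover have "closed ((\<lambda>y. (p, y)) -` {(x, y). R x y})"
    by (rule continuous_closed_vimage[OF assms]) (intro continuous_intros)
  ultimately show ?thesis by simp
qed

theorem mainTheorem5:
  fixes R :: "real \<Rightarrow> real \<Rightarrow> bool"
  assumes "topological_orientation R"
    and "\<And>x y. R x y \<Longrightarrow> x \<le> y"
    and "\<And>a b. left_bounded R {a, b} \<Longrightarrow> \<exists>m. is_meet R {a, b} m"
  shows "cc_sponge R"
  unfolding cc_sponge_def
proof (intro allI impI)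
  fix P assume H: "P \<noteq> {} \<and> right_bounded R P"
  then obtain s where s: "\<forall>p\<in>P. R p s" unfolding right_bounded_def by auto
  from H obtain p0 where p0: "p0 \<in> P" by auto
  define U where "U = {y. \<forall>p\<in>P. R p y}"
  have cl: "closed {(x, y). R x y}" using assms(1) unfolding topological_orientation_def by auto
  have "U = (\<Inter>p\<in>P. {y. R p y})" unfolding U_def by auto
  hence Ucl: "closed U" using section_closed[OF cl] by auto
  have Une: "U \<noteq> {}" using s unfolding U_def by auto
  have Ubd: "bdd_below U" unfolding bdd_below_def U_def using p0 assms(2) by blast
  define u where "u = Inf U"
  have uU: "u \<in> U" unfolding u_def using closed_contains_Inf[OF Une Ubd Ucl] .
  have umin: "\<And>y. y \<in> U \<Longrightarrow> u \<le> y" unfolding u_def using Ubd by (simp add: cInf_lower)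
  show "\<exists>x. is_join R P x"
  proof (rule exI[of _ u], unfold is_join_def, intro conjI allI impI)
    show "\<forall>p\<in>P. R p u" using uU unfolding U_def by auto
  next
    fix y assume y: "\<forall>p\<in>P. R p y"
    have "left_bounded R {u, y}" unfolding left_bounded_def
      using p0 y uU unfolding U_def by auto
    then obtain m where m: "is_meet R {u, y} m" using assms(3) by blast
    have "m \<in> U" unfolding U_def using m uU y unfolding is_meet_def U_def by auto
    hence "u \<le> m" by (rule umin)
    moreover have "m \<le> u" using m assms(2) unfolding is_meet_def by auto
    ultimately have "m = u" by simp
    thus "R u y" using m unfolding is_meet_def by auto
  qed
qed

end
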